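(* Let $n\ge 1$ and let $G_0=\mathbb{Z}^n$ be the graph with vertex set $\mathbb{Z}^n$ and edges between $a,b\in\mathbb{Z}^n$ iff $\sum_{k=1}^n|a_k-b_k|=1$. Let $G_{l+1}$ be the clique graph of $G_l$ for $l\ge0$. Then $G_{l+2}\cong G_l$ for every $l\ge 0$; in particular $G_{2k}\cong \mathbb{Z}^n$ and $G_{2k+1}\cong G_1$ for all $k\ge 0$.
   Context: Graphs are simple and undirected. A clique is a maximal complete subgraph. The clique graph of a graph $H$ has as vertices the cliques of $H$, two distinct cliques being adjacent iff they share at least one vertex. $\cong$ denotes graph isomorphism (bijection on vertices preserving adjacency in both directions). *)

theory Defs
  imports Main
begin

definition is_graph :: "'a set \<Rightarrow> ('a \<Rightarrow> 'a \<Rightarrow> bool) \<Rightarrow> bool" where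
  "is_graph V E \<longleftrightarrow> (\<forall>x y. E x y \<longrightarrow> x \<in> V \<and> y \<in> V \<and> E y x \<and> x \<noteq> y)"

definition complete_set :: "'a set \<Rightarrow> ('a \<Rightarrow> 'a \<Rightarrow> bool) \<Rightarrow> 'a set \<Rightarrow> bool" where
  "complete_set V E C \<longleftrightarrow> C \<subseteq> V \<and> (\<forall>x\<in>C. \<forall>y\<in>C. x \<noteq> y \<longrightarrow> E x y)"

definition is_clique :: "'a set \<Rightarrow> ('a \<Rightarrow> 'a \<Rightarrow> bool) \<Rightarrow> 'a set \<Rightarrow> bool" where
  "is_clique V E C \<longleftrightarrow> C \<noteq> {} \<and> complete_set V E C \<and>
     (\<forall>D. complete_set V E D \<and> C \<subseteq> D \<longrightarrow> D = C)"

definition clique_V :: "'a set \<Rightarrow> ('a \<Rightarrow> 'a \<Rightarrow> bool) \<Rightarrow> 'a set set" where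
  "clique_V V E = {C. is_clique V E C}"

definition clique_E :: "'a set \<Rightarrow> ('a \<Rightarrow> 'a \<Rightarrow> bool) \<Rightarrow> 'a set \<Rightarrow> 'a set \<Rightarrow> bool" where
  "clique_E V E C D \<longleftrightarrow> C \<in> clique_V V E \<and> D \<in> clique_V V E \<and> C \<noteq> D \<and> C \<inter> D \<noteq> {}"

definition graph_iso :: "'a set \<Rightarrow> ('a \<Rightarrow> 'a \<Rightarrow> bool) \<Rightarrow> 'b set \<Rightarrow> ('b \<Rightarrow> 'b \<Rightarrow> bool) \<Rightarrow> bool" where
  "graph_iso V E V' E' \<longleftrightarrow>
     (\<exists>f. bij_betw f V V' \<and> (\<forall>x\<in>V. \<forall>y\<in>V. E x y \<longleftrightarrow> E' (f x) (f y)))"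

definition grid_V :: "nat \<Rightarrow> int list set" where
  "grid_V n = {a. length a = n}"

definition grid_E :: "nat \<Rightarrow> int list \<Rightarrow> int list \<Rightarrow> bool" where
  "grid_E n a b \<longleftrightarrow> a \<in> grid_V n \<and> b \<in> grid_V n \<and> (\<Sum>k<n. \<bar>a ! k - b ! k\<bar>) = 1"

end

theory Submission
  imports Defs
begin

section \<open>General isomorphism facts\<close>

lemma iso_refl: "graph_iso V E V E"
  unfolding graph_iso_def by (rule exI[of _ id]) auto

lemma iso_inv:
  assumes f: "bij_betw f V V'" "\<forall>x\<in>V. \<forall>y\<in>V. E x y \<longleftrightarrow> E' (f x) (f y)"
  shows "bij_betw (inv_into V f) V' V \<and>
    (\<forall>x\<in>V'. \<forall>y\<in>V'. E' x y \<longleftrightarrow> E (inv_into V f x) (inv_into V f y))"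
proof -
  let ?g = "inv_into V f"
  have g: "bij_betw ?g V' V" using f(1) by (rule bij_betw_inv_into)
  have "\<forall>x\<in>V'. \<forall>y\<in>V'. E' x y \<longleftrightarrow> E (?g x) (?g y)"
  proof (intro ballI)
    fix x y assume xy: "x \<in> V'" "y \<in> V'"
    have gx: "?g x \<in> V" "?g y \<in> V" using g xy bij_betwE by blast+
    have "f (?g x) = x" "f (?g y) = y" using xy f(1)
      by (simp_all add: bij_betw_def f_inv_into_f)
    thus "E' x y \<longleftrightarrow> E (?g x) (?g y)" using f(2) gx by metis
  qed
  thus ?thesis using g by blast
qed

lemma iso_sym:
  assumes "graph_iso V E V' E'" shows "graph_iso V' E' V E"
proof -
  obtain f where f: "bij_betw f V V'" "\<forall>x\<in>V. \<forall>y\<in>V. E x y \<longleftrightarrow> E' (f x) (f y)"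
    using assms unfolding graph_iso_def by blast
  show ?thesis using iso_inv[OF f] unfolding graph_iso_def by blast
qed

lemma iso_trans:
  assumes "graph_iso V1 E1 V2 E2" "graph_iso V2 E2 V3 E3" shows "graph_iso V1 E1 V3 E3"
proof -
  obtain f where f: "bij_betw f V1 V2" "\<forall>x\<in>V1. \<forall>y\<in>V1. E1 x y \<longleftrightarrow> E2 (f x) (f y)"
    using assms(1) unfolding graph_iso_def by blast
  obtain g where g: "bij_betw g V2 V3" "\<forall>x\<in>V2. \<forall>y\<in>V2. E2 x y \<longleftrightarrow> E3 (g x) (g y)"
    using assms(2) unfolding graph_iso_def by blast
  have "bij_betw (g \<circ> f) V1 V3" using f(1) g(1) by (rule bij_betw_trans)
  moreover have "\<forall>x\<in>V1. \<forall>y\<in>V1. E1 x y \<longleftrightarrow> E3 ((g \<circ> f) x) ((g \<circ> f) y)"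
  proof (intro ballI)
    fix x y assume xy: "x \<in> V1" "y \<in> V1"
    have "f x \<in> V2" "f y \<in> V2" using xy bij_betwE[OF f(1)] by auto
    thus "E1 x y \<longleftrightarrow> E3 ((g \<circ> f) x) ((g \<circ> f) y)" using f(2) g(2) xy by simp
  qed
  ultimately show ?thesis unfolding graph_iso_def by blast
qed

lemma iso_complete:
  assumes f: "bij_betw f V V'" "\<forall>x\<in>V. \<forall>y\<in>V. E x y \<longleftrightarrow> E' (f x) (f y)"
    and C: "C \<subseteq> V"
  shows "complete_set V E C \<longleftrightarrow> complete_set V' E' (f ` C)"
proof -
  have inj: "inj_on f V" and im: "f ` V = V'" using f(1) by (auto simp: bij_betw_def)
  have eq: "(x \<noteq> y \<longrightarrow> E x y) \<longleftrightarrow> (f x \<noteq> f y \<longrightarrow> E' (f x) (f y))"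
    if "x \<in> C" "y \<in> C" for x y
  proof -
    have xy: "x \<in> V" "y \<in> V" using that C by auto
    have "(f x = f y) = (x = y)" using inj_on_eq_iff[OF inj xy] .
    thus ?thesis using f(2) xy by simp
  qed
  have s1: "f ` C \<subseteq> V'" using C im by auto
  have "(\<forall>x\<in>C. \<forall>y\<in>C. x \<noteq> y \<longrightarrow> E x y) \<longleftrightarrow>
      (\<forall>x\<in>C. \<forall>y\<in>C. f x \<noteq> f y \<longrightarrow> E' (f x) (f y))"
    using eq by (intro ball_cong refl) simp
  also have "\<dots> \<longleftrightarrow> (\<forall>x\<in>f ` C. \<forall>y\<in>f ` C. x \<noteq> y \<longrightarrow> E' x y)"
    by simp
  finally show ?thesis using C s1 unfolding complete_set_def by simp
qed

lemma iso_clique: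
  assumes f: "bij_betw f V V'" "\<forall>x\<in>V. \<forall>y\<in>V. E x y \<longleftrightarrow> E' (f x) (f y)"
    and C: "is_clique V E C"
  shows "is_clique V' E' (f ` C)"
proof -
  have CV: "C \<subseteq> V" using C by (auto simp: is_clique_def complete_set_def)
  have inj: "inj_on f V" and im: "f ` V = V'" using f(1) by (auto simp: bij_betw_def)
  show ?thesis unfolding is_clique_def
  proof (intro conjI allI impI)
    show "f ` C \<noteq> {}" using C by (auto simp: is_clique_def)
    show "complete_set V' E' (f ` C)" using iso_complete[OF f CV] C by (auto simp: is_clique_def)
    fix D assume D: "complete_set V' E' D \<and> f ` C \<subseteq> D"
    let ?g = "inv_into V f"
    have DV: "D \<subseteq> V'" using D by (auto simp: complete_set_def)
    have D0V: "?g ` D \<subseteq> V"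
    proof
      fix z assume "z \<in> ?g ` D"
      then obtain y where y: "y \<in> D" "z = ?g y" by blast
      have "y \<in> f ` V" using DV im y by auto
      thus "z \<in> V" using y inv_into_into by metis
    qed
    have fg: "f (?g y) = y" if "y \<in> D" for y
    proof -
      have "y \<in> f ` V" using DV im that by auto
      thus ?thesis by (rule f_inv_into_f)
    qed
    have fD0: "f ` (?g ` D) = D"
    proof -
      have "f ` (?g ` D) = (\<lambda>y. f (?g y)) ` D" by (simp add: image_image)
      also have "\<dots> = (\<lambda>y. y) ` D" using fg by (intro image_cong) simp_all
      finally show ?thesis by simp
    qed
    have "complete_set V E (?g ` D)" using iso_complete[OF f D0V] fD0 D by simp
    moreover have "C \<subseteq> ?g ` D"
    proof
      fix x assume x: "x \<in> C"
      have "f x \<in> D" using D x by auto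
      moreover have "?g (f x) = x" using inj x CV by (simp add: inv_into_f_f subsetD)
      ultimately show "x \<in> ?g ` D" by (metis image_eqI)
    qed
    moreover have mx: "\<And>D. complete_set V E D \<Longrightarrow> C \<subseteq> D \<Longrightarrow> D = C"
      using C unfolding is_clique_def by blast
    ultimately have "?g ` D = C" by blast
    thus "D = f ` C" using fD0 by auto
  qed
qed

lemma iso_K:
  assumes "graph_iso V E V' E'"
  shows "graph_iso (clique_V V E) (clique_E V E) (clique_V V' E') (clique_E V' E')"
proof -
  obtain f where f: "bij_betw f V V'" "\<forall>x\<in>V. \<forall>y\<in>V. E x y \<longleftrightarrow> E' (f x) (f y)"
    using assms unfolding graph_iso_def by blast
  define g where "g = inv_into V f"
  have g: "bij_betw g V' V" "\<forall>x\<in>V'. \<forall>y\<in>V'. E' x y \<longleftrightarrow> E (g x) (g y)"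
    using iso_inv[OF f] unfolding g_def by blast+
  have inj: "inj_on f V" and im: "f ` V = V'" using f(1) by (auto simp: bij_betw_def)
  have sub: "C \<subseteq> V" if "C \<in> clique_V V E" for C
    using that unfolding clique_V_def is_clique_def complete_set_def by blast
  have sub': "D \<subseteq> V'" if "D \<in> clique_V V' E'" for D
    using that unfolding clique_V_def is_clique_def complete_set_def by blast
  have ieq: "f ` C = f ` D \<longleftrightarrow> C = D" if "C \<in> clique_V V E" "D \<in> clique_V V E" for C D
    using inj_on_image_eq_iff[OF inj sub[OF that(1)] sub[OF that(2)]] .
  have injI: "inj_on ((`) f) (clique_V V E)"
    unfolding inj_on_def using ieq by blast
  have img: "f ` C \<in> clique_V V' E'" if "C \<in> clique_V V E" for C
    using iso_clique[OF f] that unfolding clique_V_def by blast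
  have "(`) f ` clique_V V E = clique_V V' E'"
  proof
    show "(`) f ` clique_V V E \<subseteq> clique_V V' E'"
      using img by blast
    show "clique_V V' E' \<subseteq> (`) f ` clique_V V E"
    proof
      fix D assume D: "D \<in> clique_V V' E'"
      have "g ` D \<in> clique_V V E" using iso_clique[OF g] D unfolding clique_V_def by blast
      moreover have "f ` g ` D = D"
      proof -
        have fg: "f (g y) = y" if "y \<in> D" for y
        proof -
          have "y \<in> f ` V" using sub'[OF D] im that by auto
          thus ?thesis unfolding g_def by (rule f_inv_into_f)
        qed
        have "f ` (g ` D) = (\<lambda>y. f (g y)) ` D" by (simp add: image_image)
        also have "\<dots> = (\<lambda>y. y) ` D" using fg by (intro image_cong) simp_all
        finally show ?thesis by simp
      qed
      ultimately show "D \<in> (`) f ` clique_V V E" by (metis image_eqI)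
    qed
  qed
  hence bij: "bij_betw ((`) f) (clique_V V E) (clique_V V' E')"
    using injI by (simp add: bij_betw_def)
  have "\<forall>C\<in>clique_V V E. \<forall>D\<in>clique_V V E.
      clique_E V E C D \<longleftrightarrow> clique_E V' E' (f ` C) (f ` D)"
  proof (intro ballI)
    fix C D assume CD: "C \<in> clique_V V E" "D \<in> clique_V V E"
    have i1: "f ` C \<in> clique_V V' E'" "f ` D \<in> clique_V V' E'"
      using img CD by auto
    have i2: "f ` C = f ` D \<longleftrightarrow> C = D" using ieq CD by blast
    have "f ` (C \<inter> D) = f ` C \<inter> f ` D"
      using inj_on_image_Int[OF inj sub[OF CD(1)] sub[OF CD(2)]] .
    hence i3: "f ` C \<inter> f ` D = {} \<longleftrightarrow> C \<inter> D = {}" by (metis image_is_empty)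
    show "clique_E V E C D \<longleftrightarrow> clique_E V' E' (f ` C) (f ` D)"
      using CD i1 i2 i3 unfolding clique_E_def by simp
  qed
  thus ?thesis using bij unfolding graph_iso_def by blast
qed

section \<open>Triangle-free graphs with minimum degree two\<close>

locale tfg =
  fixes V :: "'a set" and E :: "'a \<Rightarrow> 'a \<Rightarrow> bool"
  assumes symE: "E x y \<Longrightarrow> E y x"
    and inV: "E x y \<Longrightarrow> x \<in> V \<and> y \<in> V \<and> x \<noteq> y"
    and tri: "E x y \<Longrightarrow> E y z \<Longrightarrow> E x z \<Longrightarrow> False"
    and two: "x \<in> V \<Longrightarrow> \<exists>u d. E x u \<and> E x d \<and> u \<noteq> d"
begin

definition edges :: "'a set set" where "edges = {{a,b} | a b. E a b}"
definition star :: "'a \<Rightarrow> 'a set set" where "star v = {{v,w} | w. E v w}"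

lemma cV: "clique_V V E = edges"
proof (intro equalityI subsetI)
  fix C assume "C \<in> clique_V V E"
  hence C: "C \<noteq> {}" "complete_set V E C" "\<And>D. complete_set V E D \<Longrightarrow> C \<subseteq> D \<Longrightarrow> D = C"
    unfolding clique_V_def is_clique_def by blast+
  have Cc: "\<And>x y. x \<in> C \<Longrightarrow> y \<in> C \<Longrightarrow> x \<noteq> y \<Longrightarrow> E x y" "C \<subseteq> V"
    using C(2) unfolding complete_set_def by blast+
  obtain a where a: "a \<in> C" using C(1) by blast
  have aV: "a \<in> V" using Cc(2) a by blast
  obtain u where u: "E a u" using two[OF aV] by blast
  show "C \<in> edges"
  proof (cases "\<exists>b\<in>C. b \<noteq> a")
    case True
    then obtain b where b: "b \<in> C" "b \<noteq> a" by blast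
    have ab: "E a b" using Cc(1) a b by metis
    have "C = {a,b}"
    proof
      show "{a,b} \<subseteq> C" using a b by simp
      show "C \<subseteq> {a,b}"
      proof
        fix c assume c: "c \<in> C"
        show "c \<in> {a,b}"
        proof (rule ccontr)
          assume "c \<notin> {a,b}"
          hence "E a c" "E b c" using Cc(1) a b c by auto
          thus False using tri[OF ab] by blast
        qed
      qed
    qed
    thus ?thesis using ab unfolding edges_def by blast
  next
    case False
    hence Ca: "C = {a}" using a by blast
    have uu: "u \<in> V" "a \<noteq> u" "E u a" using inV[OF u] symE[OF u] by auto
    have "complete_set V E {a,u}" using u uu aV unfolding complete_set_def by auto
    hence "{a,u} = C" using C(3) Ca by blast
    thus ?thesis using Ca uu by auto
  qed
next
  fix C assume "C \<in> edges"
  then obtain a b where C: "C = {a,b}" and ab: "E a b" unfolding edges_def by blast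
  have ab2: "a \<in> V" "b \<in> V" "a \<noteq> b" "E b a" using inV[OF ab] symE[OF ab] by auto
  show "C \<in> clique_V V E"
    unfolding clique_V_def is_clique_def mem_Collect_eq
  proof (intro conjI allI impI)
    show "C \<noteq> {}" using C by blast
    show "complete_set V E C" using C ab ab2 unfolding complete_set_def by auto
    fix D assume D: "complete_set V E D \<and> C \<subseteq> D"
    have Dc: "\<And>x y. x \<in> D \<Longrightarrow> y \<in> D \<Longrightarrow> x \<noteq> y \<Longrightarrow> E x y"
      using D unfolding complete_set_def by blast
    show "D = C"
    proof
      show "C \<subseteq> D" using D by blast
      show "D \<subseteq> C"
      proof
        fix c assume c: "c \<in> D"
        show "c \<in> C"
        proof (rule ccontr)
          assume "c \<notin> C"
          moreover have "a \<in> D" "b \<in> D" using D C by auto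
          ultimately have "E a c" "E b c" using Dc c C by auto
          thus False using tri[OF ab] by blast
        qed
      qed
    qed
  qed
qed

lemma LE: "clique_E V E C D \<longleftrightarrow> C \<in> edges \<and> D \<in> edges \<and> C \<noteq> D \<and> C \<inter> D \<noteq> {}"
  unfolding clique_E_def cV ..

lemma edge_star: "e \<in> edges \<Longrightarrow> a \<in> e \<Longrightarrow> e \<in> star a"
proof -
  assume e: "e \<in> edges" and a: "a \<in> e"
  then obtain x y where xy: "e = {x,y}" "E x y" unfolding edges_def by blast
  show ?thesis
  proof (cases "a = x")
    case True thus ?thesis using xy unfolding star_def by blast
  next
    case False
    hence "a = y" using a xy by blast
    moreover have "e = {y,x}" using xy by blast
    ultimately show ?thesis using symE[OF xy(2)] unfolding star_def by blast
  qed
qed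

lemma star_edges: "star v \<subseteq> edges"
  unfolding star_def edges_def by blast

lemma star_clique: assumes v: "v \<in> V" shows "is_clique edges (clique_E V E) (star v)"
proof -
  obtain u d where ud: "E v u" "E v d" "u \<noteq> d" using two[OF v] by blast
  have vin: "v \<in> e" if "e \<in> star v" for e using that unfolding star_def by blast
  have comp: "complete_set edges (clique_E V E) (star v)"
    unfolding complete_set_def LE using star_edges vin by blast
  show ?thesis unfolding is_clique_def
  proof (intro conjI allI impI)
    show "star v \<noteq> {}" using ud unfolding star_def by blast
    show "complete_set edges (clique_E V E) (star v)" by (rule comp)
    fix D assume D: "complete_set edges (clique_E V E) D \<and> star v \<subseteq> D"
    have Dc: "\<And>x y. x \<in> D \<Longrightarrow> y \<in> D \<Longrightarrow> x \<noteq> y \<Longrightarrow> x \<inter> y \<noteq> {}" "D \<subseteq> edges"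
      using D unfolding complete_set_def LE by blast+
    have vu: "{v,u} \<in> D" "{v,d} \<in> D" using D ud unfolding star_def by blast+
    show "D = star v"
    proof
      show "star v \<subseteq> D" using D by blast
      show "D \<subseteq> star v"
      proof
        fix e assume e: "e \<in> D"
        have ee: "e \<in> edges" using e Dc(2) by blast
        show "e \<in> star v"
        proof (cases "v \<in> e")
          case True thus ?thesis using edge_star ee by blast
        next
          case False
          have "e \<noteq> {v,u}" "e \<noteq> {v,d}" using False by auto
          hence "e \<inter> {v,u} \<noteq> {}" "e \<inter> {v,d} \<noteq> {}" using Dc(1) e vu by auto
          hence "u \<in> e" "d \<in> e" using False by auto
          obtain x y where xy: "e = {x,y}" "E x y" using ee unfolding edges_def by blast
          have "E u d"
          proof (cases "u = x")
            case True
            hence "d = y" using \<open>d \<in> e\<close> xy ud(3) by blast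
            thus ?thesis using True xy by simp
          next
            case False
            hence "u = y" "d = x" using \<open>u \<in> e\<close> \<open>d \<in> e\<close> xy ud(3) by blast+
            thus ?thesis using symE[OF xy(2)] by simp
          qed
          thus ?thesis using tri[OF ud(1) _ ud(2)] by blast
        qed
      qed
    qed
  qed
qed

lemma clique_star: assumes C: "is_clique edges (clique_E V E) C" shows "\<exists>v\<in>V. C = star v"
proof -
  have C1: "C \<noteq> {}" "\<And>x y. x \<in> C \<Longrightarrow> y \<in> C \<Longrightarrow> x \<noteq> y \<Longrightarrow> x \<inter> y \<noteq> {}" "C \<subseteq> edges"
    "\<And>D. complete_set edges (clique_E V E) D \<Longrightarrow> C \<subseteq> D \<Longrightarrow> D = C"
    using C unfolding is_clique_def complete_set_def LE by blast+
  obtain e where e: "e \<in> C" using C1(1) by blast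
  obtain a b where ab: "e = {a,b}" "E a b" using e C1(3) unfolding edges_def by blast
  have abV: "a \<in> V" "b \<in> V" "a \<noteq> b" using inV[OF ab(2)] by auto
  have starc: "complete_set edges (clique_E V E) (star w)" if "w \<in> V" for w
    using star_clique[OF that] unfolding is_clique_def by blast
  have key: "C \<subseteq> star a \<or> C \<subseteq> star b"
  proof (rule ccontr)
    assume "\<not> ?thesis"
    then obtain e1 e2 where e1: "e1 \<in> C" "e1 \<notin> star a" and e2: "e2 \<in> C" "e2 \<notin> star b" by blast
    have e1E: "e1 \<in> edges" "e2 \<in> edges" using e1 e2 C1(3) by blast+
    have "a \<notin> e1" using e1 e1E edge_star by blast
    have "b \<notin> e2" using e2 e1E edge_star by blast
    have "e1 \<noteq> e" using \<open>a \<notin> e1\<close> ab by blast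
    hence "e1 \<inter> e \<noteq> {}" using C1(2) e1 e by blast
    hence "b \<in> e1" using \<open>a \<notin> e1\<close> ab by blast
    obtain x1 y1 where xy1: "e1 = {x1,y1}" "E x1 y1" using e1E unfolding edges_def by blast
    obtain c where c: "e1 = {b,c}" "E b c"
    proof (cases "b = x1")
      case True thus ?thesis using that xy1 by blast
    next
      case False hence "b = y1" using \<open>b \<in> e1\<close> xy1 by blast
      thus ?thesis using that[of x1] xy1 symE by blast
    qed
    have "e2 \<noteq> e" using \<open>b \<notin> e2\<close> ab by blast
    hence "e2 \<inter> e \<noteq> {}" using C1(2) e2 e by blast
    hence "a \<in> e2" using \<open>b \<notin> e2\<close> ab by blast
    obtain x2 y2 where xy2: "e2 = {x2,y2}" "E x2 y2" using e1E unfolding edges_def by blast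
    obtain c' where c': "e2 = {a,c'}" "E a c'"
    proof (cases "a = x2")
      case True thus ?thesis using that xy2 by blast
    next
      case False hence "a = y2" using \<open>a \<in> e2\<close> xy2 by blast
      thus ?thesis using that[of x2] xy2 symE by blast
    qed
    have "e1 \<noteq> e2" using \<open>a \<notin> e1\<close> \<open>a \<in> e2\<close> by blast
    hence "e1 \<inter> e2 \<noteq> {}" using C1(2) e1 e2 by blast
    moreover have "b \<noteq> c'" using \<open>b \<notin> e2\<close> c' by blast
    moreover have "c \<noteq> a" using \<open>a \<notin> e1\<close> c by blast
    ultimately have "c = c'" using c c' abV(3) by blast
    thus False using tri[OF ab(2) c(2)] c'(2) by blast
  qed
  thus ?thesis
  proof
    assume "C \<subseteq> star a" thus ?thesis using C1(4) starc abV by metis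
  next
    assume "C \<subseteq> star b" thus ?thesis using C1(4) starc abV by metis
  qed
qed

lemma star_inj: assumes "v \<in> V" "w \<in> V" "star v = star w" shows "v = w"
proof (rule ccontr)
  assume ne: "v \<noteq> w"
  obtain u d where ud: "E v u" "E v d" "u \<noteq> d" using two[OF assms(1)] by blast
  have "{v,u} \<in> star w" "{v,d} \<in> star w" using assms(3) ud unfolding star_def by blast+
  then obtain x y where xy: "{v,u} = {w,x}" "{v,d} = {w,y}" unfolding star_def by blast
  have "w \<in> {v,u}" "w \<in> {v,d}" unfolding xy by simp_all
  hence "w = u" "w = d" using ne by simp_all
  thus False using ud(3) by simp
qed

lemma KK: "graph_iso V E (clique_V (clique_V V E) (clique_E V E)) (clique_E (clique_V V E) (clique_E V E))"
proof -
  have injS: "inj_on star V" using star_inj unfolding inj_on_def by blast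
  have imS: "star ` V = clique_V edges (clique_E V E)"
  proof
    show "star ` V \<subseteq> clique_V edges (clique_E V E)"
      using star_clique unfolding clique_V_def by blast
    show "clique_V edges (clique_E V E) \<subseteq> star ` V"
      using clique_star unfolding clique_V_def by blast
  qed
  have bij: "bij_betw star V (clique_V edges (clique_E V E))"
    using injS imS by (simp add: bij_betw_def)
  have pres: "\<forall>v\<in>V. \<forall>w\<in>V. E v w \<longleftrightarrow> clique_E edges (clique_E V E) (star v) (star w)"
  proof (intro ballI iffI)
    fix v w assume vw: "v \<in> V" "w \<in> V"
    {
      assume e: "E v w"
      have "v \<noteq> w" using inV[OF e] by simp
      hence "star v \<noteq> star w" using star_inj vw by blast
      moreover have "{v,w} \<in> star v" using e unfolding star_def by blast
      moreover have "{v,w} \<in> star w" using symE[OF e] unfolding star_def by blast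
      moreover have "star v \<in> clique_V edges (clique_E V E)" "star w \<in> clique_V edges (clique_E V E)"
        using imS vw by blast+
      ultimately show "clique_E edges (clique_E V E) (star v) (star w)"
        unfolding clique_E_def by blast
    }
    {
      assume c: "clique_E edges (clique_E V E) (star v) (star w)"
      have ne: "star v \<noteq> star w" using c unfolding clique_E_def by simp
      have "star v \<inter> star w \<noteq> {}" using c unfolding clique_E_def by simp
      then obtain x where x: "x \<in> star v" "x \<in> star w" by blast
      obtain a where a: "x = {v,a}" "E v a" using x(1) unfolding star_def by blast
      obtain b where b: "x = {w,b}" "E w b" using x(2) unfolding star_def by blast
      have "v \<noteq> w" using ne by blast
      moreover have "w \<in> {v,a}" using a(1) b(1) by (metis insertI1)
      ultimately have "a = w" by simp
      thus "E v w" using a by simp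
    }
  qed
  have "graph_iso V E (clique_V edges (clique_E V E)) (clique_E edges (clique_E V E))"
    unfolding graph_iso_def using bij pres by blast
  thus ?thesis unfolding cV .
qed
end

section \<open>The grid\<close>

lemma even_abs_minus: "even (\<bar>x\<bar> - x :: int)"
proof (cases "x \<ge> 0")
  case True thus ?thesis by simp
next
  case False
  hence "\<bar>x\<bar> - x = 2 * (- x)" by simp
  thus ?thesis by simp
qed

lemma grid_par:
  assumes "grid_E n a b"
  shows "odd ((\<Sum>k<n. a ! k) - (\<Sum>k<n. b ! k))"
proof -
  have s1: "(\<Sum>k<n. \<bar>a ! k - b ! k\<bar>) = 1" using assms unfolding grid_E_def by simp
  have "even (\<Sum>k<n. \<bar>a ! k - b ! k\<bar> - (a ! k - b ! k))"
    by (rule dvd_sum) (rule even_abs_minus)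
  hence "even ((\<Sum>k<n. \<bar>a ! k - b ! k\<bar>) - (\<Sum>k<n. (a ! k - b ! k)))"
    by (simp add: sum_subtractf)
  hence "odd (\<Sum>k<n. (a ! k - b ! k))" using s1 by simp
  thus ?thesis by (simp add: sum_subtractf)
qed

lemma odd3: "odd ((p::int) - q) \<Longrightarrow> odd (q - r) \<Longrightarrow> odd (p - r) \<Longrightarrow> False"
proof -
  assume h: "odd (p - q)" "odd (q - r)" "odd (p - r)"
  have "p - r = (p - q) + (q - r)" by simp
  moreover have "even ((p - q) + (q - r))" using h(1,2) by simp
  ultimately show False using h(3) by simp
qed

lemma grid_tfg: assumes n: "n \<ge> 1" shows "tfg (grid_V n) (grid_E n)"
proof
  fix x y assume "grid_E n x y"
  moreover have "(\<Sum>k<n. \<bar>y ! k - x ! k\<bar>) = (\<Sum>k<n. \<bar>x ! k - y ! k\<bar>)"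
    by (rule sum.cong) (simp_all add: abs_minus_commute)
  ultimately show "grid_E n y x" unfolding grid_E_def by simp
next
  fix x y assume e: "grid_E n x y"
  moreover have "x \<noteq> y"
  proof
    assume "x = y"
    hence "(\<Sum>k<n. \<bar>x ! k - y ! k\<bar>) = 0" by simp
    thus False using e unfolding grid_E_def by simp
  qed
  ultimately show "x \<in> grid_V n \<and> y \<in> grid_V n \<and> x \<noteq> y" unfolding grid_E_def by simp
next
  fix x y z assume "grid_E n x y" "grid_E n y z" "grid_E n x z"
  hence "odd ((\<Sum>k<n. x ! k) - (\<Sum>k<n. y ! k))" "odd ((\<Sum>k<n. y ! k) - (\<Sum>k<n. z ! k))"
    "odd ((\<Sum>k<n. x ! k) - (\<Sum>k<n. z ! k))" using grid_par by blast+
  thus False using odd3 by blast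
next
  fix a assume a: "a \<in> grid_V n"
  have len: "length a = n" using a unfolding grid_V_def by simp
  define u where "u = a[0 := a ! 0 + 1]"
  define d where "d = a[0 := a ! 0 - 1]"
  have lu: "length u = n" "length d = n" using len unfolding u_def d_def by simp_all
  have "(\<Sum>k<n. \<bar>a ! k - u ! k\<bar>) = (\<Sum>k<n. if k = 0 then 1 else 0)"
    by (rule sum.cong) (use len n in \<open>auto simp: u_def nth_list_update\<close>)
  also have "\<dots> = 1" using n by simp
  finally have eu: "grid_E n a u" unfolding grid_E_def grid_V_def using len lu by simp
  have "(\<Sum>k<n. \<bar>a ! k - d ! k\<bar>) = (\<Sum>k<n. if k = 0 then 1 else 0)"
    by (rule sum.cong) (use len n in \<open>auto simp: d_def nth_list_update\<close>)
  also have "\<dots> = 1" using n by simp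
  finally have ed: "grid_E n a d" unfolding grid_E_def grid_V_def using len lu by simp
  have "u ! 0 \<noteq> d ! 0" using len n unfolding u_def d_def by simp
  hence "u \<noteq> d" by blast
  thus "\<exists>u d. grid_E n a u \<and> grid_E n a d \<and> u \<noteq> d" using eu ed by blast
qed

theorem mainTheorem7:
  fixes n :: nat and GV :: "nat \<Rightarrow> 'u set" and GE :: "nat \<Rightarrow> 'u \<Rightarrow> 'u \<Rightarrow> bool"
  assumes "n \<ge> 1"
    and G0: "graph_iso (GV 0) (GE 0) (grid_V n) (grid_E n)"
    and Gsuc: "\<And>l. graph_iso (GV (Suc l)) (GE (Suc l)) (clique_V (GV l) (GE l)) (clique_E (GV l) (GE l))"
  shows "(\<forall>l. graph_iso (GV (l + 2)) (GE (l + 2)) (GV l) (GE l))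
       \<and> (\<forall>k. graph_iso (GV (2 * k)) (GE (2 * k)) (grid_V n) (grid_E n))
       \<and> (\<forall>k. graph_iso (GV (2 * k + 1)) (GE (2 * k + 1)) (GV 1) (GE 1))"
proof -
  interpret T: tfg "grid_V n" "grid_E n" using grid_tfg[OF assms(1)] .
  have P: "graph_iso (GV (l + 2)) (GE (l + 2)) (GV l) (GE l)" for l
  proof (induction l)
    case 0
    have s1: "graph_iso (GV (Suc (Suc 0))) (GE (Suc (Suc 0)))
       (clique_V (GV (Suc 0)) (GE (Suc 0))) (clique_E (GV (Suc 0)) (GE (Suc 0)))" by (rule Gsuc)
    note s2 = iso_K[OF Gsuc[of 0]]
    note s3 = iso_K[OF iso_K[OF G0]]
    note s4 = iso_sym[OF T.KK]
    note s5 = iso_sym[OF G0]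
    have "graph_iso (GV (Suc (Suc 0))) (GE (Suc (Suc 0))) (GV 0) (GE 0)"
      using iso_trans[OF s1 iso_trans[OF s2 iso_trans[OF s3 iso_trans[OF s4 s5]]]] .
    thus ?case by (simp add: numeral_2_eq_2)
  next
    case (Suc l)
    have "graph_iso (GV (Suc (l + 2))) (GE (Suc (l + 2))) (GV (Suc l)) (GE (Suc l))"
      using iso_trans[OF Gsuc[of "l + 2"] iso_trans[OF iso_K[OF Suc.IH] iso_sym[OF Gsuc[of l]]]] .
    thus ?case by simp
  qed
  have Q: "graph_iso (GV (2 * k)) (GE (2 * k)) (grid_V n) (grid_E n)" for k
  proof (induction k)
    case 0 thus ?case using G0 by simp
  next
    case (Suc k)
    have "2 * Suc k = 2 * k + 2" by simp
    thus ?case using iso_trans[OF P[of "2 * k"] Suc.IH] by simp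
  qed
  have R: "graph_iso (GV (2 * k + 1)) (GE (2 * k + 1)) (GV 1) (GE 1)" for k
  proof (induction k)
    case 0 thus ?case using iso_refl by simp
  next
    case (Suc k)
    have "2 * Suc k + 1 = (2 * k + 1) + 2" by simp
    thus ?case using iso_trans[OF P[of "2 * k + 1"] Suc.IH] by simp
  qed
  show ?thesis using P Q R by blast
qed

end
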